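(* Let $\{c_n\}_{n\ge1}$ be a real sequence and $\{d_{n+1}\}_{n\ge1}$ a positive chain sequence, and let the polynomials $P_n$ be defined by $P_0(x)=1$, $P_1(x)=x-c_1$ and \[ P_{n+1}(x)=(x-c_{n+1})P_n(x)-d_{n+1}(x^2+1)P_{n-1}(x),\qquad n\ge1 . \] Put $u_0(x)=1$ and \[ u_n(x)=\frac{(-1)^n}{(x-i)^n\prod_{j=1}^n\sqrt{d_{j+1}}}\,P_n(x),\qquad n\ge1, \] and $\mathbf u_n(x)=[u_0(x),u_1(x),\dots,u_{n-1}(x)]^T$. For $n\ge2$ let $\mathbf A_n$ be the $n\times n$ tridiagonal matrix with diagonal entries $c_1,\dots,c_n$, entries $(\mathbf A_n)_{k,k+1}=i\sqrt{d_{k+1}}$ and $(\mathbf A_n)_{k+1,k}=-i\sqrt{d_{k+1}}$ for $k=1,\dots,n-1$, and let $\mathbf B_n$ be the $n\times n$ tridiagonal matrix with all diagonal entries $1$ and $(\mathbf B_n)_{k,k+1}=(\mathbf B_n)_{k+1,k}=\sqrt{d_{k+1}}$ for $k=1,\dots,n-1$. Let $\mathbf e_n$ be the $n$-th column of the $n\times n$ identity matrix. Then for every $n\ge2$, \[ \mathbf A_n\mathbf u_n(x)=x\,\mathbf B_n\mathbf u_n(x)+\sqrt{d_{n+1}}\,(x-i)\,u_n(x)\,\mathbf e_n . \] Moreover, for $n\ge2$ the zeros of $P_n$ are the eigenvalues of the generalized eigenvalue problem $\mathbf A_n\mathbf u_n(x)=x\,\mathbf B_n\mathbf u_n(x)$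.
   Context: A sequence $\{d_{n+1}\}_{n\ge1}$ is a positive chain sequence if there is a sequence $\{g_{n+1}\}_{n\ge0}$ (a parameter sequence) with $0\le g_1<1$, $0<g_n<1$ for $n\ge2$, and $d_{n+1}=(1-g_n)g_{n+1}$ for $n\ge1$. *)

theory Defs
  imports Complex_Main "Jordan_Normal_Form.Matrix"
begin

definition positive_chain_sequence :: "(nat \<Rightarrow> real) \<Rightarrow> bool" where
  "positive_chain_sequence d \<longleftrightarrow>
     (\<exists>g :: nat \<Rightarrow> real. 0 \<le> g 1 \<and> g 1 < 1 \<and> (\<forall>n\<ge>2. 0 < g n \<and> g n < 1) \<and>
        (\<forall>n\<ge>1. d (n + 1) = (1 - g n) * g (n + 1)))"

fun Pn :: "(nat \<Rightarrow> real) \<Rightarrow> (nat \<Rightarrow> real) \<Rightarrow> nat \<Rightarrow> complex \<Rightarrow> complex" where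
  "Pn c d 0 x = 1"
| "Pn c d (Suc 0) x = x - of_real (c 1)"
| "Pn c d (Suc (Suc n)) x =
     (x - of_real (c (n + 2))) * Pn c d (Suc n) x - of_real (d (n + 2)) * (x\<^sup>2 + 1) * Pn c d n x"

definition un :: "(nat \<Rightarrow> real) \<Rightarrow> (nat \<Rightarrow> real) \<Rightarrow> nat \<Rightarrow> complex \<Rightarrow> complex" where
  "un c d n x = (-1) ^ n / ((x - \<i>) ^ n * of_real (\<Prod>j = 1..n. sqrt (d (j + 1)))) * Pn c d n x"

definition uvec :: "(nat \<Rightarrow> real) \<Rightarrow> (nat \<Rightarrow> real) \<Rightarrow> nat \<Rightarrow> complex \<Rightarrow> complex vec" where
  "uvec c d n x = vec n (\<lambda>k. un c d k x)"

text \<open>Matrices A_n and B_n (0-based indices: row i corresponds to row i+1 of the paper).\<close>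
definition Amat :: "(nat \<Rightarrow> real) \<Rightarrow> (nat \<Rightarrow> real) \<Rightarrow> nat \<Rightarrow> complex mat" where
  "Amat c d n = mat n n (\<lambda>(i, j).
     if i = j then of_real (c (i + 1))
     else if j = i + 1 then \<i> * of_real (sqrt (d (i + 2)))
     else if i = j + 1 then - \<i> * of_real (sqrt (d (j + 2)))
     else 0)"

definition Bmat :: "(nat \<Rightarrow> real) \<Rightarrow> nat \<Rightarrow> complex mat" where
  "Bmat d n = mat n n (\<lambda>(i, j).
     if i = j then 1
     else if j = i + 1 then of_real (sqrt (d (i + 2)))
     else if i = j + 1 then of_real (sqrt (d (j + 2)))
     else 0)"

end

theory Submission
  imports Defs
begin

lemma dpos: assumes "positive_chain_sequence d" "m \<ge> 2" shows "d m > 0"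
proof -
  obtain g where g: "0 \<le> g 1" "g 1 < 1" "\<forall>n\<ge>2. 0 < g n \<and> g n < 1"
     "\<forall>n\<ge>1. d (n + 1) = (1 - g n) * g (n + 1)"
    using assms(1) unfolding positive_chain_sequence_def by blast
  have m: "m = (m - 1) + 1" using assms(2) by simp
  have "d m = d ((m-1)+1)" using m by simp
  also have "\<dots> = (1 - g (m-1)) * g ((m-1)+1)" using g(4)[rule_format, of "m-1"] assms(2) by simp
  finally have "d m = (1 - g (m-1)) * g m" using m by simp
  moreover have "g (m-1) < 1" using g(2,3) assms(2)
    by (cases "m - 1 = 1") auto
  moreover have "g m > 0" using g(3) assms(2) by auto
  ultimately show ?thesis by simp
qed

lemma prodS: "(\<Prod>j = 1..Suc k. sqrt (d (j + 1))) = (\<Prod>j = 1..k. sqrt (d (j + 1))) * sqrt (d (k+2))"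
  by (simp add: prod.cl_ivl_Suc)

lemma prodS_pos: assumes "\<And>m::nat. m \<ge> 2 \<Longrightarrow> d m > 0" shows "(\<Prod>j = 1..k. sqrt (d (j + 1))) > 0"
  by (rule prod_pos) (use assms in auto)

lemma un_rec0:
  assumes "\<And>m. m \<ge> 2 \<Longrightarrow> d m > 0" "x \<noteq> \<i>"
  shows "(of_real (c 1) - x) * un c d 0 x + (\<i> - x) * of_real (sqrt (d 2)) * un c d 1 x = 0"
proof -
  define t where "t = sqrt (d 2)"
  have "t > 0" using assms(1) unfolding t_def by simp
  moreover have "x - \<i> \<noteq> 0" using assms(2) by simp
  moreover have "un c d 1 x = - (x - of_real (c 1)) / ((x - \<i>) * of_real t)" unfolding un_def t_def apply (simp add: numeral_2_eq_2) by (simp add: minus_divide_left)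
  moreover have "un c d 0 x = 1" unfolding un_def by simp
  ultimately show ?thesis unfolding t_def[symmetric]
    by (simp add: divide_simps) (simp add: algebra_simps)
qed

lemma un_rec:
  assumes "\<And>m. m \<ge> 2 \<Longrightarrow> d m > 0" "x \<noteq> \<i>"
  shows "(of_real (c (k+2)) - x) * un c d (k+1) x + (\<i> - x) * of_real (sqrt (d (k+3))) * un c d (k+2) x
     + (- \<i> - x) * of_real (sqrt (d (k+2))) * un c d k x = 0"
proof -
  define S where "S = (\<Prod>j = 1..k. sqrt (d (j + 1)))"
  define t2 where "t2 = sqrt (d (k+2))"
  define t3 where "t3 = sqrt (d (k+3))"
  have S1: "(\<Prod>j = 1..k+1. sqrt (d (j + 1))) = S * t2" unfolding S_def t2_def using prodS by simp
  have S2: "(\<Prod>j = 1..k+2. sqrt (d (j + 1))) = S * t2 * t3" unfolding S_def t2_def t3_def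
    using prodS[of d "Suc k"] prodS[of d k] by (simp add: numeral_eq_Suc)
  have "S > 0" unfolding S_def using prodS_pos assms(1) by blast
  have "t2 > 0" "t3 > 0" unfolding t2_def t3_def using assms(1) by auto
  have t2sq: "complex_of_real t2 * complex_of_real t2 = of_real (d (k+2))"
    unfolding t2_def using assms(1)[of "k+2"] by (simp flip: of_real_mult)
  have t2sq': "complex_of_real (d (Suc (Suc k))) = complex_of_real t2 * complex_of_real t2"
    using t2sq by (simp add: numeral_eq_Suc)
  have xi: "x - \<i> \<noteq> 0" using assms(2) by simp
  have P: "Pn c d (k+2) x = (x - of_real (c (k + 2))) * Pn c d (k+1) x - of_real (d (k + 2)) * (x\<^sup>2 + 1) * Pn c d k x"
    by (simp add: numeral_eq_Suc)
  have x2: "x\<^sup>2 + 1 = (x - \<i>) * (x + \<i>)" by (simp add: algebra_simps power2_eq_square)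
  show ?thesis unfolding un_def S1 S2 P x2 S_def[symmetric] t2_def[symmetric] t3_def[symmetric]
    using \<open>S > 0\<close> \<open>t2 > 0\<close> \<open>t3 > 0\<close> xi
    apply (simp add: divide_simps)
    apply (simp add: t2sq')
    by (simp add: algebra_simps)
qed

lemma tri_mult:
  assumes "i < n" "v \<in> carrier_vec n"
  shows "(mat n n (\<lambda>(i,j). if i = j then a i else if j = i+1 then b i else if i = j+1 then e j else 0) *\<^sub>v v) $ i
    = a i * v$i + (if i+1 < n then b i * v$(i+1) else 0) + (if 0 < i then e (i-1) * v$(i-1) else 0)"
proof -
  have "(mat n n (\<lambda>(i,j). if i = j then a i else if j = i+1 then b i else if i = j+1 then e j else 0) *\<^sub>v v) $ i
     = (\<Sum>j\<in>{0..<n}. (if i = j then a i else if j = i+1 then b i else if i = j+1 then e j else 0) * v$j)"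
    using assms by (simp add: scalar_prod_def)
  also have "\<dots> = (\<Sum>j\<in>{0..<n}. (if j = i then a i * v$j else 0)) + (\<Sum>j\<in>{0..<n}. (if j = i+1 then b i * v$j else 0))
      + (\<Sum>j\<in>{0..<n}. (if 0 < i then (if j = i - 1 then e j * v$j else 0) else 0))"
    unfolding sum.distrib[symmetric] by (rule sum.cong) auto
  also have "\<dots> = a i * v$i + (if i+1 < n then b i * v$(i+1) else 0) + (if 0 < i then e (i-1) * v$(i-1) else 0)"
    using assms(1) by auto
  finally show ?thesis .
qed

lemma resid:
  assumes "i < n" "w \<in> carrier_vec n"
  shows "(Amat c d n *\<^sub>v w) $ i - z * (Bmat d n *\<^sub>v w) $ i =
     (of_real (c (i+1)) - z) * w$i + (if i+1 < n then (\<i> - z) * of_real (sqrt (d (i+2))) * w$(i+1) else 0)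
     + (if 0 < i then (- \<i> - z) * of_real (sqrt (d (i+1))) * w$(i-1) else 0)"
proof -
  have A: "(Amat c d n *\<^sub>v w) $ i = of_real (c (i+1)) * w$i + (if i+1 < n then \<i> * of_real (sqrt (d (i+2))) * w$(i+1) else 0)
     + (if 0 < i then - \<i> * of_real (sqrt (d (i-1+2))) * w$(i-1) else 0)"
    unfolding Amat_def using tri_mult[OF assms, where a="\<lambda>i. of_real (c (i + 1))" and b = "\<lambda>i. \<i> * of_real (sqrt (d (i + 2)))"
       and e = "\<lambda>j. - \<i> * of_real (sqrt (d (j + 2)))"] by simp
  have B: "(Bmat d n *\<^sub>v w) $ i = w$i + (if i+1 < n then of_real (sqrt (d (i+2))) * w$(i+1) else 0)
     + (if 0 < i then of_real (sqrt (d (i-1+2))) * w$(i-1) else 0)"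
    unfolding Bmat_def using tri_mult[OF assms, where a="\<lambda>i. 1" and b = "\<lambda>i. of_real (sqrt (d (i + 2)))"
       and e = "\<lambda>j. of_real (sqrt (d (j + 2)))"] by simp
  have e: "0 < i \<Longrightarrow> i - 1 + 2 = i + 1" by simp
  show ?thesis unfolding A B by (cases "0 < i"; cases "i+1 < n") (simp_all add: e algebra_simps)
qed

lemma Pn_i: "Pn c d k \<i> \<noteq> 0"
proof (induction c d k \<i> rule: Pn.induct)
  case (1 c d)
  then show ?case by simp
next
  case (2 c d)
  then show ?case by (simp add: complex_eq_iff)
next
  case (3 c d n)
  have "(\<i>::complex)\<^sup>2 + 1 = 0" by (simp add: power2_eq_square)
  moreover have "\<i> - complex_of_real (c (n + 2)) \<noteq> 0" by (simp add: complex_eq_iff)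
  ultimately show ?case using 3 by simp
qed


lemma part1:
  assumes dp: "\<And>m::nat. m \<ge> 2 \<Longrightarrow> d m > 0" and n: "n \<ge> 2" and x: "x \<noteq> \<i>"
  shows "Amat c d n *\<^sub>v uvec c d n x =
              x \<cdot>\<^sub>v (Bmat d n *\<^sub>v uvec c d n x)
              + (of_real (sqrt (d (n + 1))) * (x - \<i>) * un c d n x) \<cdot>\<^sub>v unit_vec n (n - 1)"
proof (rule eq_vecI)
  show "dim_vec (Amat c d n *\<^sub>v uvec c d n x) = dim_vec (x \<cdot>\<^sub>v (Bmat d n *\<^sub>v uvec c d n x)
              + (of_real (sqrt (d (n + 1))) * (x - \<i>) * un c d n x) \<cdot>\<^sub>v unit_vec n (n - 1))"
    by (simp add: Amat_def Bmat_def)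
  fix i assume "i < dim_vec (x \<cdot>\<^sub>v (Bmat d n *\<^sub>v uvec c d n x)
              + (of_real (sqrt (d (n + 1))) * (x - \<i>) * un c d n x) \<cdot>\<^sub>v unit_vec n (n - 1))"
  hence i: "i < n" by simp
  have uc: "uvec c d n x \<in> carrier_vec n" by (simp add: uvec_def)
  have R: "(Amat c d n *\<^sub>v uvec c d n x) $ i - x * (Bmat d n *\<^sub>v uvec c d n x) $ i =
     (of_real (c (i+1)) - x) * un c d i x + (if i+1 < n then (\<i> - x) * of_real (sqrt (d (i+2))) * un c d (i+1) x else 0)
     + (if 0 < i then (- \<i> - x) * of_real (sqrt (d (i+1))) * un c d (i-1) x else 0)"
    using resid[OF i uc, where c=c and d=d and z=x] i by (simp add: uvec_def)
  have rhs: "(x \<cdot>\<^sub>v (Bmat d n *\<^sub>v uvec c d n x)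
              + (of_real (sqrt (d (n + 1))) * (x - \<i>) * un c d n x) \<cdot>\<^sub>v unit_vec n (n - 1)) $ i
     = x * (Bmat d n *\<^sub>v uvec c d n x) $ i + (if i = n - 1 then of_real (sqrt (d (n + 1))) * (x - \<i>) * un c d n x else 0)"
    using i by (simp add: Bmat_def)
  have "(Amat c d n *\<^sub>v uvec c d n x) $ i - x * (Bmat d n *\<^sub>v uvec c d n x) $ i
      = (if i = n - 1 then of_real (sqrt (d (n + 1))) * (x - \<i>) * un c d n x else 0)"
  proof (cases "i = 0")
    case True
    then show ?thesis unfolding R using un_rec0[where d=d, OF dp x, where c=c] n by (simp add: numeral_2_eq_2)
  next
    case False
    then obtain k where k: "i = k + 1" by (metis Suc_eq_plus1 not0_implies_Suc)
    have E: "(of_real (c (k+2)) - x) * un c d (k+1) x + (\<i> - x) * of_real (sqrt (d (k+3))) * un c d (k+2) x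
     + (- \<i> - x) * of_real (sqrt (d (k+2))) * un c d k x = 0" by (rule un_rec[where d=d, OF dp x, where c=c])
    show ?thesis
    proof (cases "i + 1 < n")
      case True
      then have "i \<noteq> n - 1" by simp
      then show ?thesis unfolding R using E k True by (simp add: numeral_eq_Suc)
    next
      case False
      then have kn: "k + 2 = n" using i k by simp
      have "(of_real (c (k+2)) - x) * un c d (k+1) x + (- \<i> - x) * of_real (sqrt (d (k+2))) * un c d k x
         = of_real (sqrt (d (n + 1))) * (x - \<i>) * un c d n x"
        using E kn by (simp add: algebra_simps numeral_eq_Suc)
      moreover have "i = n - 1" using kn k by simp
      ultimately show ?thesis unfolding R using False k kn by (simp add: numeral_eq_Suc kn[symmetric])
    qed
  qed
  then show "(Amat c d n *\<^sub>v uvec c d n x) $ i = (x \<cdot>\<^sub>v (Bmat d n *\<^sub>v uvec c d n x)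
              + (of_real (sqrt (d (n + 1))) * (x - \<i>) * un c d n x) \<cdot>\<^sub>v unit_vec n (n - 1)) $ i"
    unfolding rhs by (simp add: algebra_simps)
qed


theorem theorem1p1:
  fixes c d :: "nat \<Rightarrow> real" and n :: nat
  assumes "positive_chain_sequence d" and "n \<ge> 2"
  shows "(\<forall>x :: complex. x \<noteq> \<i> \<longrightarrow>
            Amat c d n *\<^sub>v uvec c d n x =
              x \<cdot>\<^sub>v (Bmat d n *\<^sub>v uvec c d n x)
              + (of_real (sqrt (d (n + 1))) * (x - \<i>) * un c d n x) \<cdot>\<^sub>v unit_vec n (n - 1))
       \<and> {x :: complex. Pn c d n x = 0} =
         {z :: complex. \<exists>v \<in> carrier_vec n. v \<noteq> 0\<^sub>v n \<and>
              Amat c d n *\<^sub>v v = z \<cdot>\<^sub>v (Bmat d n *\<^sub>v v)}"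
proof -
  have dp: "\<And>m::nat. m \<ge> 2 \<Longrightarrow> d m > 0" using dpos[OF assms(1)] by blast
  have n: "n \<ge> 2" by fact
  have P1: "\<forall>x :: complex. x \<noteq> \<i> \<longrightarrow>
            Amat c d n *\<^sub>v uvec c d n x =
              x \<cdot>\<^sub>v (Bmat d n *\<^sub>v uvec c d n x)
              + (of_real (sqrt (d (n + 1))) * (x - \<i>) * un c d n x) \<cdot>\<^sub>v unit_vec n (n - 1)"
    using part1[where d=d and c=c and n=n, OF dp n] by blast
  have Spos: "(\<Prod>j = 1..k. sqrt (d (j + 1))) > 0" for k using prodS_pos[where d=d, OF dp] by blast
  have un0: "un c d k z = 0 \<longleftrightarrow> Pn c d k z = 0" if "z \<noteq> \<i>" for k z
  proof -
    have "d (Suc a) \<noteq> 0" if "a \<ge> 1" for a using dp[of "Suc a"] that by simp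
    then show ?thesis using Spos[of k] that unfolding un_def by auto
  qed
  have "{x :: complex. Pn c d n x = 0} \<subseteq>
         {z :: complex. \<exists>v \<in> carrier_vec n. v \<noteq> 0\<^sub>v n \<and>
              Amat c d n *\<^sub>v v = z \<cdot>\<^sub>v (Bmat d n *\<^sub>v v)}"
  proof
    fix z assume "z \<in> {x :: complex. Pn c d n x = 0}"
    hence Pz: "Pn c d n z = 0" by simp
    have zi: "z \<noteq> \<i>"
    proof
      assume "z = \<i>"
      with Pz Pn_i[of c d n] show False by simp
    qed
    have u0: "un c d n z = 0" using un0[OF zi] Pz by simp
    have Bc: "Bmat d n \<in> carrier_mat n n" unfolding Bmat_def by simp
    have uc: "uvec c d n z \<in> carrier_vec n" unfolding uvec_def by simp
    have C: "z \<cdot>\<^sub>v (Bmat d n *\<^sub>v uvec c d n z) \<in> carrier_vec n"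
      using mult_mat_vec_carrier[OF Bc uc] by simp
    have Z: "0 \<cdot>\<^sub>v unit_vec n (n - 1) = (0\<^sub>v n :: complex vec)"
    proof (rule eq_vecI)
      fix i assume "i < dim_vec (0\<^sub>v n :: complex vec)"
      thus "(0 \<cdot>\<^sub>v unit_vec n (n - 1)) $ i = (0\<^sub>v n :: complex vec) $ i" by simp
    qed simp
    have E: "Amat c d n *\<^sub>v uvec c d n z =
              z \<cdot>\<^sub>v (Bmat d n *\<^sub>v uvec c d n z)
              + (of_real (sqrt (d (n + 1))) * (z - \<i>) * un c d n z) \<cdot>\<^sub>v unit_vec n (n - 1)"
      using P1 zi by blast
    have eq: "Amat c d n *\<^sub>v uvec c d n z = z \<cdot>\<^sub>v (Bmat d n *\<^sub>v uvec c d n z)"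
      using E unfolding u0 mult_zero_right Z right_zero_vec[OF C] .
    have u00: "uvec c d n z $ 0 = 1"
    proof -
      have "uvec c d n z $ 0 = un c d 0 z" using n unfolding uvec_def by simp
      also have "\<dots> = 1" unfolding un_def by simp
      finally show ?thesis .
    qed
    have "uvec c d n z \<noteq> 0\<^sub>v n"
    proof
      assume "uvec c d n z = 0\<^sub>v n"
      hence "uvec c d n z $ 0 = (0\<^sub>v n :: complex vec) $ 0" by simp
      also have "\<dots> = 0" using n by simp
      finally show False using u00 by simp
    qed
    moreover have "uvec c d n z \<in> carrier_vec n" by (simp add: uvec_def)
    ultimately show "z \<in> {z :: complex. \<exists>v \<in> carrier_vec n. v \<noteq> 0\<^sub>v n \<and>
              Amat c d n *\<^sub>v v = z \<cdot>\<^sub>v (Bmat d n *\<^sub>v v)}" using eq by blast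
  qed
  moreover have "{z :: complex. \<exists>v \<in> carrier_vec n. v \<noteq> 0\<^sub>v n \<and>
              Amat c d n *\<^sub>v v = z \<cdot>\<^sub>v (Bmat d n *\<^sub>v v)} \<subseteq> {x :: complex. Pn c d n x = 0}"
  proof
    fix z assume "z \<in> {z :: complex. \<exists>v \<in> carrier_vec n. v \<noteq> 0\<^sub>v n \<and>
              Amat c d n *\<^sub>v v = z \<cdot>\<^sub>v (Bmat d n *\<^sub>v v)}"
    then obtain v where v: "v \<in> carrier_vec n" "v \<noteq> 0\<^sub>v n" "Amat c d n *\<^sub>v v = z \<cdot>\<^sub>v (Bmat d n *\<^sub>v v)"
      by blast
    have R: "(of_real (c (i+1)) - z) * v$i + (if i+1 < n then (\<i> - z) * of_real (sqrt (d (i+2))) * v$(i+1) else 0)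
     + (if 0 < i then (- \<i> - z) * of_real (sqrt (d (i+1))) * v$(i-1) else 0) = 0" if i: "i < n" for i
    proof -
      have "(Amat c d n *\<^sub>v v) $ i = z * (Bmat d n *\<^sub>v v) $ i"
        using v(3) i proof -
          have "dim_vec (Bmat d n *\<^sub>v v) = n" by (simp add: Bmat_def)
          then show ?thesis using v(3) i by (metis index_smult_vec(1))
        qed
      thus ?thesis using resid[OF i v(1), where c=c and d=d and z=z] by simp
    qed
    have vz: "v = 0\<^sub>v n" if "\<forall>k<n. v $ k = 0"
      by (rule eq_vecI) (use that v(1) in auto)
    show "z \<in> {x :: complex. Pn c d n x = 0}"
    proof (cases "z = \<i>")
      case True
      have "\<forall>k<n. v $ k = 0"
      proof (intro allI impI)
        fix k assume "k < n" thus "v $ k = 0"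
        proof (induction k)
          case 0
          have "(of_real (c 1) - \<i>) * v$0 = 0" using R[OF 0] unfolding True by (simp split: if_split_asm)
          moreover have "of_real (c 1) - \<i> \<noteq> 0" by (simp add: complex_eq_iff)
          ultimately show ?case by simp
        next
          case (Suc k)
          have "(of_real (c (Suc k+1)) - \<i>) * v$(Suc k) = 0" using R[OF Suc.prems] Suc unfolding True by (simp split: if_split_asm)
          moreover have "of_real (c (Suc k + 1)) - \<i> \<noteq> 0" by (simp add: complex_eq_iff)
          ultimately show ?case by simp
        qed
      qed
      thus ?thesis using vz v(2) by blast
    next
      case False
      have sne: "complex_of_real (sqrt (d (k+2))) \<noteq> 0" for k using dp[of "k+2"] by simp
      have iz: "\<i> - z \<noteq> 0" using False by simp
      have V: "\<forall>k<n. v $ k = v $ 0 * un c d k z"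
      proof (intro allI impI)
        fix k assume "k < n" thus "v $ k = v $ 0 * un c d k z"
        proof (induction k rule: less_induct)
          case (less k)
          show ?case
          proof (cases k)
            case 0
            then show ?thesis by (simp add: un_def)
          next
            case (Suc m)
            note km = Suc
            show ?thesis
            proof (cases m)
              case 0
              have a: "(of_real (c 1) - z) * v$0 + (\<i> - z) * of_real (sqrt (d 2)) * v$1 = 0"
                using R[of 0] n by (simp add: numeral_2_eq_2)
              have b: "(of_real (c 1) - z) * un c d 0 z + (\<i> - z) * of_real (sqrt (d 2)) * un c d 1 z = 0"
                using un_rec0[where d=d, OF dp False, where c=c] .
              have "(\<i> - z) * of_real (sqrt (d 2)) * (v$1 - v$0 * un c d 1 z) = 0"
                using arg_cong2[OF a arg_cong[OF b, of "\<lambda>t. v$0 * t"], of "(-)"]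
                by (simp add: algebra_simps un_def)
              then show ?thesis using km 0 iz sne[of 0] by (simp add: numeral_2_eq_2)
            next
              case (Suc j)
              have jn: "j + 2 < n" using less.prems km Suc by simp
              have a: "(of_real (c (j+2)) - z) * v$(j+1) + (\<i> - z) * of_real (sqrt (d (j+3))) * v$(j+2)
                  + (- \<i> - z) * of_real (sqrt (d (j+2))) * v$j = 0"
                using R[of "j+1"] jn by (simp add: numeral_eq_Suc)
              have b: "(of_real (c (j+2)) - z) * un c d (j+1) z + (\<i> - z) * of_real (sqrt (d (j+3))) * un c d (j+2) z
                  + (- \<i> - z) * of_real (sqrt (d (j+2))) * un c d j z = 0"
                by (rule un_rec[where d=d, OF dp False, where c=c])
              have h1: "v$(j+1) = v$0 * un c d (j+1) z" using less.IH[of "j+1"] jn km Suc by simp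
              have h0: "v$j = v$0 * un c d j z" using less.IH[of "j"] jn km Suc by simp
              have "(\<i> - z) * of_real (sqrt (d (j+3))) * (v$(j+2) - v$0 * un c d (j+2) z) = 0"
                using arg_cong2[OF a arg_cong[OF b, of "\<lambda>t. v$0 * t"], of "(-)"] h0 h1
                by (simp add: algebra_simps)
              moreover have "complex_of_real (sqrt (d (j+3))) \<noteq> 0" using sne[of "j+1"] by (simp add: numeral_eq_Suc)
              ultimately show ?thesis using km Suc iz by (simp add: numeral_eq_Suc)
            qed
          qed
        qed
      qed
      have v0: "v $ 0 \<noteq> 0"
      proof
        assume "v $ 0 = 0"
        hence "\<forall>k<n. v $ k = 0" using V by simp
        thus False using vz v(2) by blast
      qed
      obtain j where j: "n = j + 2" using n by (metis add.commute le_Suc_ex)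
      have a: "(of_real (c (j+2)) - z) * v$(j+1) + (- \<i> - z) * of_real (sqrt (d (j+2))) * v$j = 0"
        using R[of "j+1"] j by (simp add: numeral_eq_Suc)
      have b: "(of_real (c (j+2)) - z) * un c d (j+1) z + (\<i> - z) * of_real (sqrt (d (j+3))) * un c d (j+2) z
          + (- \<i> - z) * of_real (sqrt (d (j+2))) * un c d j z = 0"
        by (rule un_rec[where d=d, OF dp False, where c=c])
      have h1: "v$(j+1) = v$0 * un c d (j+1) z" using V[rule_format, of "j+1"] j by simp
      have h0: "v$j = v$0 * un c d j z" using V[rule_format, of j] j by simp
      have "v$0 * ((\<i> - z) * of_real (sqrt (d (j+3))) * un c d (j+2) z) = 0"
        using arg_cong2[OF arg_cong[OF b, of "\<lambda>t. v$0 * t"] a, of "(-)"] h0 h1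
        by (simp add: algebra_simps)
      moreover have "complex_of_real (sqrt (d (j+3))) \<noteq> 0" using sne[of "j+1"] by (simp add: numeral_eq_Suc)
      ultimately have "un c d n z = 0" using v0 iz j by simp
      thus ?thesis using un0[OF False] by simp
    qed
  qed
  ultimately show ?thesis using P1 by blast
qed

end
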